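(* Let $n\ge3$, $b\in\mathbb{R}^n$, $K\in\{0,\ldots,n-3\}$, $\gamma>0$, and let $x^*$ be a d-stationary point of $$\min_{x\in\mathbb{R}^n}\ \tfrac12\|b-x\|_2^2+\gamma T_{K,n-2,1}(D^{(2,n)}x).$$ Let $X\in\mathbb{R}^{n\times2}$ be the matrix whose $i$-th row is $(1,i)$ and $\hat b=X(X^\top X)^{-1}X^\top b$. If $$\gamma>\frac{\|b-\hat b\|_2}{2\sqrt{(1-\cos\frac{\pi}{n})(1-\cos\frac{\pi}{n-1})}},$$ then $T_{K,n-2,1}(D^{(2,n)}x^* )=0$.
   Context: $D^{(2,n)}\in\mathbb{R}^{(n-2)\times n}$ is the second-order difference matrix: its $i$-th row has entries $1,-2,1$ in columns $i,i+1,i+2$ and zeros elsewhere. $T_{K,m,1}(z)$ for $z\in\mathbb{R}^m$ is the sum of the $m-K$ smallest values among $|z_1|,\ldots,|z_m|$. A point is d-stationary if the directional derivative of the objective there is $\ge0$ in every direction. *)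

theory Defs
  imports "HOL-Analysis.Analysis"
begin

(* Vectors in R^n are represented as functions nat => real; only the
   coordinates 0..n-1 are used (coordinate i here is coordinate i+1 of the paper). *)

definition D2 :: "nat \<Rightarrow> (nat \<Rightarrow> real) \<Rightarrow> (nat \<Rightarrow> real)" where
  "D2 n x = (\<lambda>i. if i < n - 2 then x i - 2 * x (i+1) + x (i+2) else 0)"

definition trimmed_l1 :: "nat \<Rightarrow> nat \<Rightarrow> (nat \<Rightarrow> real) \<Rightarrow> real" where
  "trimmed_l1 K m z = sum_list (take (m - K) (sort (map (\<lambda>i. \<bar>z i\<bar>) [0..<m])))"

definition objective :: "nat \<Rightarrow> nat \<Rightarrow> real \<Rightarrow> (nat \<Rightarrow> real) \<Rightarrow> (nat \<Rightarrow> real) \<Rightarrow> real" where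
  "objective n K \<gamma> b x =
     (1/2) * (\<Sum>i<n. (b i - x i)^2) + \<gamma> * trimmed_l1 K (n - 2) (D2 n x)"

definition has_dir_deriv :: "((nat \<Rightarrow> real) \<Rightarrow> real) \<Rightarrow> (nat \<Rightarrow> real) \<Rightarrow> (nat \<Rightarrow> real) \<Rightarrow> real \<Rightarrow> bool" where
  "has_dir_deriv f x d D \<longleftrightarrow>
     ((\<lambda>t. (f (\<lambda>i. x i + t * d i) - f x) / t) \<longlongrightarrow> D) (at_right 0)"

definition d_stationary :: "((nat \<Rightarrow> real) \<Rightarrow> real) \<Rightarrow> (nat \<Rightarrow> real) \<Rightarrow> bool" where
  "d_stationary f x \<longleftrightarrow> (\<forall>d. \<exists>D. has_dir_deriv f x d D \<and> D \<ge> 0)"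

(* Projection bhat = X (X^T X)^{-1} X^T b, where row i (1-based) of X is (1, i).
   Written out: G = X^T X = [[s0, s1],[s1, s2]], c = X^T b = (c0, c1),
   (alpha, beta) = G^{-1} c (explicit 2x2 inverse), bhat_i = alpha + beta * i. *)
definition proj_lin :: "nat \<Rightarrow> (nat \<Rightarrow> real) \<Rightarrow> (nat \<Rightarrow> real)" where
  "proj_lin n b = (let
      s0 = (\<Sum>i<n. 1::real);
      s1 = (\<Sum>i<n. real (i+1));
      s2 = (\<Sum>i<n. real (i+1)^2);
      c0 = (\<Sum>i<n. b i);
      c1 = (\<Sum>i<n. real (i+1) * b i);
      det = s0 * s2 - s1^2;
      \<alpha> = (s2 * c0 - s1 * c1) / det;
      \<beta> = (s0 * c1 - s1 * c0) / det
    in (\<lambda>i. \<alpha> + \<beta> * real (i+1)))"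

definition norm2 :: "nat \<Rightarrow> (nat \<Rightarrow> real) \<Rightarrow> real" where
  "norm2 n v = sqrt (\<Sum>i<n. (v i)^2)"

end

theory Submission
  imports Defs
begin


lemma take_sorted_le:
  fixes ys :: "real list"
  shows "sorted ys \<Longrightarrow> M \<subseteq># mset ys \<Longrightarrow> size M = k \<Longrightarrow> sum_list (take k ys) \<le> sum_mset M"
proof (induction ys arbitrary: k M)
  case Nil then show ?case by simp
next
  case (Cons y ys)
  show ?case
  proof (cases k)
    case 0 then show ?thesis using Cons by simp
  next
    case (Suc k')
    have sy: "sorted ys" and ymin: "\<And>u. u \<in> set ys \<Longrightarrow> y \<le> u" using Cons.prems(1) by auto
    show ?thesis
    proof (cases "y \<in># M")
      case True
      then obtain M' where M: "M = add_mset y M'" by (metis multi_member_split)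
      have "M' \<subseteq># mset ys" using Cons.prems(2) M by simp
      moreover have "size M' = k'" using Cons.prems(3) M Suc by simp
      ultimately have "sum_list (take k' ys) \<le> sum_mset M'" using Cons.IH sy by blast
      then show ?thesis using M Suc by simp
    next
      case False
      have sub: "M \<subseteq># mset ys" using Cons.prems(2) False
        by (metis mset.simps(2) Diff_eq_empty_iff_mset minus_add_mset_if_not_in_lhs)
      have "M \<noteq> {#}" using Cons.prems(3) Suc by auto
      then obtain u M' where M: "M = add_mset u M'" by (metis multiset_cases)
      have "u \<in> set ys" using sub M by (metis insert_subset_eq_iff mset_subset_eqD set_mset_mset union_single_eq_member)
      hence "y \<le> u" by (rule ymin)
      have "M' \<subseteq># mset ys" using sub M by (metis mset_subset_eq_insertD subset_mset.dual_order.trans subset_mset_def) 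
      moreover have "size M' = k'" using Cons.prems(3) M Suc by simp
      ultimately have "sum_list (take k' ys) \<le> sum_mset M'" using Cons.IH sy by blast
      then show ?thesis using M Suc \<open>y \<le> u\<close> by simp
    qed
  qed
qed



lemma T_nonneg: "trimmed_l1 K m z \<ge> 0"
  unfolding trimmed_l1_def
  apply (rule sum_list_nonneg)
  apply (drule in_set_takeD)
  apply auto
  done

lemma T_scale:
  assumes "(c::real) \<ge> 0"
  shows "trimmed_l1 K m (\<lambda>i. c * z i) = c * trimmed_l1 K m z"
proof -
  let ?L = "map (\<lambda>i. \<bar>z i\<bar>) [0..<m]"
  have e: "map (\<lambda>i. \<bar>c * z i\<bar>) [0..<m] = map (\<lambda>u. c * u) ?L"
    using assms by (simp add: abs_mult)
  have s: "sorted (map (\<lambda>u. c * u) (sort ?L))"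
    unfolding sorted_map
    by (rule sorted_wrt_mono_rel[of _ "(\<le>)"]) (auto intro: mult_left_mono assms)
  have "sort (map (\<lambda>u. c * u) ?L) = map (\<lambda>u. c * u) (sort ?L)"
    by (rule properties_for_sort) (simp_all only: s mset_map mset_sort)
  then show ?thesis unfolding trimmed_l1_def e
    by (simp add: take_map sum_list_const_mult)
qed

lemma T_decrease:
  assumes "K < m" and pos: "trimmed_l1 K m z > 0"
  shows "\<exists>i<m. z i \<noteq> 0 \<and> (\<forall>t. 0 < t \<and> t < \<bar>z i\<bar> \<longrightarrow>
            trimmed_l1 K m (z(i := z i - t * sgn (z i))) \<le> trimmed_l1 K m z - t)"
proof -
  define L where "L = map (\<lambda>j. \<bar>z j\<bar>) [0..<m]"
  define S where "S = sort L"
  define k where "k = m - K"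
  have k: "0 < k" "k \<le> length S" using assms(1) by (auto simp: k_def S_def L_def)
  have sS: "sorted S" by (simp add: S_def)
  define a where "a = S ! (k - 1)"
  have T: "trimmed_l1 K m z = sum_list (take k S)"
    by (simp add: trimmed_l1_def S_def L_def k_def)
  have ain: "a \<in> set (take k S)" using k unfolding a_def in_set_conv_nth by (intro exI[of _ "k-1"]) auto
  have apos: "a > 0"
  proof (rule ccontr)
    assume "\<not> a > 0"
    have "\<forall>e \<in> set (take k S). e = 0"
    proof
      fix e assume "e \<in> set (take k S)"
      then obtain j where j: "j < length (take k S)" "e = take k S ! j" by (auto simp: in_set_conv_nth)
      have "e = S ! j" "j \<le> k - 1" "j < length S" using j k by auto
      hence "e \<le> a" using sS k by (auto simp: a_def intro!: sorted_nth_mono)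
      moreover have "e \<ge> 0" using \<open>e = S ! j\<close> \<open>j < length S\<close> nth_mem[of j S]
        by (auto simp: S_def L_def)
      ultimately show "e = 0" using \<open>\<not> a > 0\<close> by linarith
    qed
    hence "sum_list (take k S) = 0" by (subst sum_list_nonneg_eq_0_iff) auto
    thus False using pos T by simp
  qed
  have "a \<in> set L" using ain by (auto simp: S_def dest: in_set_takeD)
  then obtain i where i: "i < m" "\<bar>z i\<bar> = a" by (auto simp: L_def)
  have Li: "L ! i = a" using i by (simp add: L_def)
  have "z i \<noteq> 0" using i apos by auto
  moreover have "\<forall>t. 0 < t \<and> t < \<bar>z i\<bar> \<longrightarrow>
            trimmed_l1 K m (z(i := z i - t * sgn (z i))) \<le> trimmed_l1 K m z - t"
  proof (intro allI impI)
    fix t assume t: "0 < t \<and> t < \<bar>z i\<bar>"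
    define z' where "z' = z(i := z i - t * sgn (z i))"
    have azi: "\<bar>z i - t * sgn (z i)\<bar> = a - t" using t i by (cases "z i > 0") (auto simp: sgn_if)
    define L' where "L' = map (\<lambda>j. \<bar>z' j\<bar>) [0..<m]"
    have "L' = L[i := a - t]"
      by (rule nth_equalityI) (auto simp: L'_def L_def z'_def azi nth_list_update)
    hence mL': "mset L' = add_mset (a - t) (mset L - {#a#})"
      using i by (simp add: mset_update Li L_def)
    define Mk where "Mk = mset (take k S)"
    have aMk: "a \<in># Mk" using ain by (simp add: Mk_def)
    have "Mk \<subseteq># mset S" unfolding Mk_def by (metis append_take_drop_id mset_append mset_subset_eq_add_left)
    hence "Mk \<subseteq># mset L" by (simp add: S_def)
    hence "Mk - {#a#} \<subseteq># mset L - {#a#}" by (metis diff_subset_eq_self diff_zero subset_eq_diff_conv subset_mset.dual_order.trans)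
    hence sub: "add_mset (a - t) (Mk - {#a#}) \<subseteq># mset (sort L')" by (simp add: mL')
    have sz: "size (add_mset (a - t) (Mk - {#a#})) = k"
      using aMk k by (simp add: size_Diff_singleton_if Mk_def)
    have "trimmed_l1 K m z' = sum_list (take k (sort L'))"
      by (simp add: trimmed_l1_def L'_def k_def)
    also have "\<dots> \<le> sum_mset (add_mset (a - t) (Mk - {#a#}))"
      by (rule take_sorted_le[OF sorted_sort sub sz])
    also have "\<dots> = (a - t) + (sum_mset Mk - a)" using aMk by (simp add: sum_mset.remove)
    also have "sum_mset Mk = trimmed_l1 K m z" by (simp add: Mk_def T sum_mset_sum_list)
    finally show "trimmed_l1 K m (z(i := z i - t * sgn (z i))) \<le> trimmed_l1 K m z - t"
      by (simp only: z'_def)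
  qed
  ultimately show ?thesis using i by blast
qed



lemma sum_lin: "(\<Sum>i<n. real (i+1)) = real n * (real n + 1) / 2"
  by (induction n) (auto simp: field_simps)

lemma sum_sq: "(\<Sum>i<n. real (i+1)^2) = real n * (real n + 1) * (2 * real n + 1) / 6"
  by (induction n) (auto simp: field_simps power2_eq_square)

lemma proj_affine: "\<exists>A B. \<forall>j. proj_lin n y j = A + B * real (j+1)"
  unfolding proj_lin_def Let_def by blast

lemma lin_aux: "((s2*(a-b) - s1*(c-d))/D + (N*(c-d) - s1*(a-b))/D*J) = ((s2*a - s1*c)/D + (N*c - s1*a)/D*J) - ((s2*b - s1*d)/(D::real) + (N*d - s1*b)/D*J)"
  by (cases "D = 0") (simp_all add: field_simps)

lemma proj_diff: "proj_lin n (\<lambda>j. y j - x j) j = proj_lin n y j - proj_lin n x j"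
proof -
  have "(\<Sum>i<n. real (i+1) * (y i - x i)) = (\<Sum>i<n. real (i+1) * y i) - (\<Sum>i<n. real (i+1) * x i)"
    by (simp add: right_diff_distrib sum_subtractf)
  then show ?thesis unfolding proj_lin_def Let_def sum_subtractf[of y x]
    by (simp only: lin_aux)
qed

lemma proj_orth:
  assumes "n \<ge> 2"
  shows "(\<Sum>j<n. (y j - proj_lin n y j) * (A + B * real (j+1))) = 0"
proof -
  define s1 where "s1 = (\<Sum>i<n. real (i+1))"
  define s2 where "s2 = (\<Sum>i<n. real (i+1)^2)"
  define c0 where "c0 = (\<Sum>i<n. y i)"
  define c1 where "c1 = (\<Sum>i<n. real (i+1) * y i)"
  define det where "det = real n * s2 - s1^2"
  define \<alpha> where "\<alpha> = (s2 * c0 - s1 * c1) / det"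
  define \<beta> where "\<beta> = (real n * c1 - s1 * c0) / det"
  have P: "proj_lin n y = (\<lambda>j. \<alpha> + \<beta> * real (j+1))"
    unfolding proj_lin_def Let_def \<alpha>_def \<beta>_def det_def s1_def s2_def c0_def c1_def by simp
  have "det = real n ^ 2 * (real n + 1) * (real n - 1) / 12"
    unfolding det_def s1_def s2_def sum_lin sum_sq by (simp add: field_simps power2_eq_square)
  moreover have "real n \<ge> 2" using assms by simp
  moreover have "real n ^ 2 * (real n + 1) * (real n - 1) > 0" using \<open>real n \<ge> 2\<close> by simp
  ultimately have dpos: "det > 0" by linarith
  have e1: "(\<Sum>j<n. y j - (\<alpha> + \<beta> * real (j+1))) = c0 - (real n * \<alpha> + \<beta> * s1)"
    by (simp add: sum_subtractf sum.distrib sum_distrib_left[symmetric] c0_def s1_def)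
  have e2: "(\<Sum>j<n. real (j+1) * (y j - (\<alpha> + \<beta> * real (j+1)))) = c1 - (\<alpha> * s1 + \<beta> * s2)"
    by (simp add: sum_subtractf sum.distrib sum_distrib_left[symmetric] c1_def s1_def s2_def
        algebra_simps power2_eq_square)
  have dne: "det \<noteq> 0" using dpos by simp
  have "real n * \<alpha> + \<beta> * s1 = (real n*(s2*c0 - s1*c1) + (real n*c1 - s1*c0) * s1)/det"
    unfolding \<alpha>_def \<beta>_def using dne by (simp add: field_simps)
  also have "real n*(s2*c0 - s1*c1) + (real n*c1 - s1*c0) * s1 = c0 * det"
    by (simp add: det_def algebra_simps power2_eq_square)
  finally have z1: "c0 - (real n * \<alpha> + \<beta> * s1) = 0" using dne by simp
  have "\<alpha> * s1 + \<beta> * s2 = ((s2*c0 - s1*c1) * s1 + (real n*c1 - s1*c0) * s2)/det"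
    unfolding \<alpha>_def \<beta>_def using dne by (simp add: field_simps)
  also have "(s2*c0 - s1*c1) * s1 + (real n*c1 - s1*c0) * s2 = c1 * det"
    by (simp add: det_def algebra_simps power2_eq_square)
  finally have z2: "c1 - (\<alpha> * s1 + \<beta> * s2) = 0" using dne by simp
  have "(\<Sum>j<n. (y j - proj_lin n y j) * (A + B * real (j+1)))
      = A * (\<Sum>j<n. y j - (\<alpha> + \<beta> * real (j+1))) + B * (\<Sum>j<n. real (j+1) * (y j - (\<alpha> + \<beta> * real (j+1))))"
    unfolding P by (simp add: sum_distrib_left sum.distrib[symmetric] algebra_simps)
  then show ?thesis using e1 e2 z1 z2 by simp
qed

lemma D2_affine: "D2 n (\<lambda>j. A + B * real (j+1)) = (\<lambda>_. 0)"
  unfolding D2_def by (auto simp: algebra_simps)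

lemma D2_lin: "D2 n (\<lambda>j. x j + t * d j) = (\<lambda>j. D2 n x j + t * D2 n d j)"
  unfolding D2_def by (auto simp: algebra_simps)

lemma D2_minus: "D2 n (\<lambda>j. x j - y j) = (\<lambda>j. D2 n x j - D2 n y j)"
  unfolding D2_def by (auto simp: algebra_simps)

lemma D2_proj: "D2 n (\<lambda>j. x j - proj_lin n x j) = D2 n x"
proof -
  obtain A B where "\<forall>j. proj_lin n x j = A + B * real (j+1)" using proj_affine by blast
  then have "proj_lin n x = (\<lambda>j. A + B * real (j+1))" by auto
  then have "D2 n (proj_lin n x) = (\<lambda>_. 0)" by (simp only: D2_affine)
  then show ?thesis by (simp add: D2_minus[of n x "proj_lin n x"])
qed



definition hfun :: "nat \<Rightarrow> nat \<Rightarrow> nat \<Rightarrow> real" where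
  "hfun n p j = (if j \<le> p then - (real j * (real n - 1 - real p)) else - (real p * (real n - 1 - real j))) / (real n - 1)"

lemma h_left: "j \<le> p \<Longrightarrow> hfun n p j = - (real j * (real n - 1 - real p)) / (real n - 1)"
  by (simp add: hfun_def)

lemma h_right: "p \<le> j \<Longrightarrow> hfun n p j = - (real p * (real n - 1 - real j)) / (real n - 1)"
  by (cases "j = p") (auto simp: hfun_def algebra_simps)

lemma hmul_left: "real n - 1 \<noteq> 0 \<Longrightarrow> j \<le> p \<Longrightarrow> hfun n p j * (real n - 1) = - (real j * (real n - 1 - real p))"
  by (simp add: h_left)

lemma hmul_right: "real n - 1 \<noteq> 0 \<Longrightarrow> p \<le> j \<Longrightarrow> hfun n p j * (real n - 1) = - (real p * (real n - 1 - real j))"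
  by (simp add: h_right)

lemma D2_h:
  assumes "n \<ge> 3" "i < n - 2"
  shows "D2 n (hfun n (i+1)) = (\<lambda>j. if j = i then 1 else 0)"
proof
  fix j
  have n1: "real n - 1 \<noteq> 0" using assms by simp
  show "D2 n (hfun n (i+1)) j = (if j = i then 1 else 0)"
  proof (cases "j < n - 2")
    case False then show ?thesis using assms by (auto simp: D2_def)
  next
    case True
    have M: "D2 n (hfun n (i+1)) j * (real n - 1) = hfun n (i+1) j * (real n - 1)
       - 2 * (hfun n (i+1) (j+1) * (real n - 1)) + hfun n (i+1) (j+2) * (real n - 1)"
      using True by (simp add: D2_def algebra_simps)
    consider "j < i" | "j = i" | "j > i" by linarith
    then show ?thesis
    proof cases
      case 1
      have a: "j \<le> i+1" "j+1 \<le> i+1" "j+2 \<le> i+1" using 1 by auto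
      have "D2 n (hfun n (i+1)) j * (real n - 1) = 0"
        unfolding M hmul_left[OF n1 a(1)] hmul_left[OF n1 a(2)] hmul_left[OF n1 a(3)]
        by (simp add: algebra_simps)
      then show ?thesis using 1 n1 by simp
    next
      case 2
      have a: "j \<le> i+1" "j+1 \<le> i+1" "i+1 \<le> j+2" using 2 by auto
      have "D2 n (hfun n (i+1)) j * (real n - 1) = 1 * (real n - 1)"
        unfolding M hmul_left[OF n1 a(1)] hmul_left[OF n1 a(2)] hmul_right[OF n1 a(3)]
        using 2 by (simp add: algebra_simps)
      then show ?thesis using 2 n1 by simp
    next
      case 3
      have a: "i+1 \<le> j" "i+1 \<le> j+1" "i+1 \<le> j+2" using 3 by auto
      have "D2 n (hfun n (i+1)) j * (real n - 1) = 0"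
        unfolding M hmul_right[OF n1 a(1)] hmul_right[OF n1 a(2)] hmul_right[OF n1 a(3)]
        by (simp add: algebra_simps)
      then show ?thesis using 3 n1 by simp
    qed
  qed
qed

lemma h_abs:
  assumes "n \<ge> 3" "1 \<le> p" "p \<le> n - 2" "j < n"
  shows "\<bar>hfun n p j\<bar> \<le> (real n - 1) / 4"
proof -
  have n1: "real n - 1 > 0" using assms by simp
  have pq: "real p * (real n - 1 - real p) \<le> (real n - 1)^2 / 4"
    using zero_le_power2[of "real n - 1 - 2 * real p"] by (simp add: power2_eq_square algebra_simps)
  have "p \<le> n - 1" using assms by simp
  hence rp: "real p \<le> real n - 1" using assms by linarith
  have "real j \<le> real n - 1" using assms by linarith
  show ?thesis
  proof (cases "j \<le> p")
    case True
    have "0 \<le> real j * (real n - 1 - real p)" using rp by simp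
    moreover have "real j * (real n - 1 - real p) \<le> real p * (real n - 1 - real p)"
      using True rp by (intro mult_right_mono) auto
    ultimately show ?thesis using True n1 pq
      by (simp add: h_left abs_div_pos divide_le_eq power2_eq_square)
  next
    case False
    have "0 \<le> real p * (real n - 1 - real j)" using \<open>real j \<le> real n - 1\<close> by simp
    moreover have "real p * (real n - 1 - real j) \<le> real p * (real n - 1 - real p)"
      using False by (intro mult_left_mono) auto
    ultimately show ?thesis using False n1 pq
      by (simp add: h_right abs_div_pos divide_le_eq power2_eq_square)
  qed
qed

lemma h_sum_bound:
  assumes "n \<ge> 3" "1 \<le> p" "p \<le> n - 2"
  shows "(\<Sum>j<n. (hfun n p j)^2) \<le> (real n - 2) * ((real n - 1) / 4)^2"
proof -
  have "(\<Sum>j<n. (hfun n p j)^2) = (\<Sum>j\<in>{1..<n-1}. (hfun n p j)^2)"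
  proof (rule sum.mono_neutral_right)
    show "\<forall>j\<in>{..<n} - {1..<n-1}. (hfun n p j)^2 = 0"
    proof
      fix j assume "j \<in> {..<n} - {1..<n-1}"
      hence "j = 0 \<or> j = n - 1" by auto
      then show "(hfun n p j)^2 = 0"
      proof
        assume "j = 0" then show ?thesis by (simp add: h_left)
      next
        assume "j = n - 1"
        moreover have "p \<le> n - 1" using assms by simp
        ultimately show ?thesis using assms by (simp add: h_right of_nat_diff)
      qed
    qed
  qed auto
  also have "\<dots> \<le> (\<Sum>j\<in>{1..<n-1}. ((real n - 1) / 4)^2)"
  proof (rule sum_mono)
    fix j assume "j \<in> {1..<n-1}"
    hence "\<bar>hfun n p j\<bar> \<le> (real n - 1) / 4" using assms by (intro h_abs) auto
    then show "(hfun n p j)^2 \<le> ((real n - 1) / 4)^2"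
      by (metis abs_ge_zero power2_abs power_mono)
  qed
  also have "\<dots> = (real n - 2) * ((real n - 1) / 4)^2"
    using assms by (simp add: of_nat_diff)
  finally show ?thesis .
qed

lemma one_minus_cos: "1 - cos (x::real) \<le> x^2 / 2"
proof -
  have "cos x = 1 - 2 * sin (x/2) ^ 2" using cos_double_sin[of "x/2"] by simp
  moreover have "sin (x/2) ^ 2 \<le> (x/2)^2"
    using abs_sin_x_le_abs_x[of "x/2"] by (metis abs_ge_zero power2_abs power_mono)
  ultimately show ?thesis by (simp add: power_divide)
qed

lemma alg_aux: "(M::real) \<noteq> 0 \<Longrightarrow> N \<noteq> 0 \<Longrightarrow> (N - 2) * (M / 4)^2 * 4 * ((pi / N)^2 / 2 * ((pi / M)^2 / 2)) = pi^4 * (N - 2) / (16 * N^2)"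
  by (simp add: field_simps power2_eq_square power4_eq_xxxx)

lemma sigma_bound:
  assumes "n \<ge> 3"
  shows "(real n - 2) * ((real n - 1) / 4)^2 * (4 * ((1 - cos (pi / real n)) * (1 - cos (pi / real (n - 1))))) \<le> 1"
proof -
  have n1: "real (n - 1) = real n - 1" using assms by (simp add: of_nat_diff)
  define a where "a = 1 - cos (pi / real n)"
  define b where "b = 1 - cos (pi / real (n - 1))"
  have a0: "0 \<le> a" "a \<le> (pi / real n)^2 / 2" unfolding a_def using one_minus_cos by auto
  have b0: "0 \<le> b" "b \<le> (pi / (real n - 1))^2 / 2" unfolding b_def n1[symmetric] using one_minus_cos by auto
  have ab: "a * b \<le> ((pi / real n)^2 / 2) * ((pi / (real n - 1))^2 / 2)"
    using a0 b0 by (intro mult_mono) auto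
  have rn: "real n \<ge> 3" using assms by simp
  have c0: "0 \<le> (real n - 2) * ((real n - 1) / 4)^2 * 4" using rn by simp
  have "(real n - 2) * ((real n - 1) / 4)^2 * (4 * (a * b))
        \<le> (real n - 2) * ((real n - 1) / 4)^2 * 4 * (((pi / real n)^2 / 2) * ((pi / (real n - 1))^2 / 2))"
    using mult_left_mono[OF ab c0] by (simp add: mult.assoc)
  also have "\<dots> = pi^4 * (real n - 2) / (16 * real n ^ 2)"
  proof -
    have "real n - 1 \<noteq> 0" "real n \<noteq> 0" using rn by auto
    then show ?thesis by (rule alg_aux)
  qed
  also have "\<dots> \<le> 1"
  proof -
    have "pi \<le> 3.15" using pi_approx by simp
    hence "pi^4 \<le> 3.15^4" by (rule power_mono) simp
    also have "(3.15::real)^4 \<le> 98.5" by (simp add: power4_eq_xxxx)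
    finally have "pi^4 \<le> 98.5" .
    hence "pi^4 * (real n - 2) \<le> 98.5 * (real n - 2)" using rn by (intro mult_right_mono) auto
    also have "\<dots> \<le> 16 * real n ^ 2" using zero_le_power2[of "4 * real n - 12.3125"] rn
      by (simp add: power2_eq_square algebra_simps) 
    finally show ?thesis using rn by (simp add: divide_le_eq)
  qed
  finally show ?thesis unfolding a_def b_def .
qed



lemma obj_diff:
  "objective n K \<gamma> b (\<lambda>i. x i + t * d i) - objective n K \<gamma> b x =
    t * (\<Sum>i<n. (x i - b i) * d i) + t^2 / 2 * (\<Sum>i<n. (d i)^2)
    + \<gamma> * (trimmed_l1 K (n - 2) (D2 n (\<lambda>i. x i + t * d i)) - trimmed_l1 K (n - 2) (D2 n x))"
proof -
  have "(\<Sum>i<n. (b i - (x i + t * d i))^2) = (\<Sum>i<n. (b i - x i)^2 + (2 * t) * ((x i - b i) * d i) + t^2 * (d i)^2)"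
    by (rule sum.cong) (auto simp: power2_eq_square algebra_simps)
  also have "\<dots> = (\<Sum>i<n. (b i - x i)^2) + (2 * t) * (\<Sum>i<n. (x i - b i) * d i) + t^2 * (\<Sum>i<n. (d i)^2)"
    by (simp add: sum.distrib sum_distrib_left)
  finally show ?thesis unfolding objective_def by (simp add: algebra_simps)
qed

lemma alg1: "t * S + t^2 / 2 * V + g * ((1 - t) * T - T) = t * (S - g * T + t * (V / 2))" for t S V g T :: real
  by (simp add: algebra_simps power2_eq_square)

lemma alg2: "g * (T' - T) \<le> g * (- t) \<Longrightarrow> t * S + t^2 / 2 * V + g * (T' - T) \<le> t * (S - g + t * (V / 2))" for t S V g T T' :: real
  by (simp add: algebra_simps power2_eq_square)

lemma dir_le:
  assumes "has_dir_deriv f x d D" "D \<ge> 0" "\<epsilon> > 0"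
    and "\<forall>t. 0 < t \<and> t < \<epsilon> \<longrightarrow> (f (\<lambda>i. x i + t * d i) - f x) / t \<le> A + t * B"
  shows "0 \<le> A"
proof -
  have lim: "((\<lambda>t. A + t * B) \<longlongrightarrow> A + 0 * B) (at_right (0::real))"
    by (intro tendsto_intros)
  have ev: "eventually (\<lambda>t. (f (\<lambda>i. x i + t * d i) - f x) / t \<le> A + t * B) (at_right (0::real))"
    unfolding eventually_at_right_field using assms(3,4) by (intro exI[of _ \<epsilon>]) auto
  have "D \<le> A + 0 * B"
    using tendsto_le[OF _ lim assms(1)[unfolded has_dir_deriv_def] ev] by simp
  then show ?thesis using assms(2) by simp
qed

lemma orth_aff:
  assumes "n \<ge> 2" "\<forall>j. a j = A + B * real (j+1)"
  shows "(\<Sum>j<n. (y j - proj_lin n y j) * a j) = 0"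
  using proj_orth[OF assms(1), of y A B] assms(2) by simp

lemma orth_proj:
  assumes "n \<ge> 2"
  shows "(\<Sum>j<n. (y j - proj_lin n y j) * proj_lin n u j) = 0"
proof -
  obtain A B where "\<forall>j. proj_lin n u j = A + B * real (j+1)" using proj_affine by blast
  then show ?thesis by (rule orth_aff[OF assms])
qed

lemma D2_neg: "D2 n (\<lambda>j. - y j) = (\<lambda>j. - D2 n y j)"
  unfolding D2_def by (auto simp: algebra_simps)

lemma D2_scale: "D2 n (\<lambda>j. c * y j) = (\<lambda>j. c * D2 n y j)"
  unfolding D2_def by (auto simp: algebra_simps)

lemma cs_abs:
  "\<bar>\<Sum>i<n. (a i::real) * b i\<bar> \<le> sqrt (\<Sum>i<n. (a i)^2) * sqrt (\<Sum>i<n. (b i)^2)"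
proof -
  have "(\<Sum>i<n. a i * b i)^2 \<le> (\<Sum>i<n. (a i)^2) * (\<Sum>i<n. (b i)^2)"
    by (rule Cauchy_Schwarz_ineq_sum)
  hence "sqrt ((\<Sum>i<n. a i * b i)^2) \<le> sqrt ((\<Sum>i<n. (a i)^2) * (\<Sum>i<n. (b i)^2))"
    by (rule real_sqrt_le_mono)
  then show ?thesis by (simp add: real_sqrt_mult)
qed

lemma one_minus_cos_pos: "0 < x \<Longrightarrow> x < 2 * pi \<Longrightarrow> 0 < 1 - cos (x::real)"
proof -
  assume "0 < x" "x < 2 * pi"
  then have "sin (x/2) > 0" by (intro sin_gt_zero) auto
  moreover have "cos x = 1 - 2 * sin (x/2) ^ 2" using cos_double_sin[of "x/2"] by simp
  ultimately show ?thesis by simp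
qed

theorem mainTheorem10:
  fixes n K :: nat and \<gamma> :: real and b xs :: "nat \<Rightarrow> real"
  assumes "n \<ge> 3" and "K \<le> n - 3" and "\<gamma> > 0"
    and "d_stationary (objective n K \<gamma> b) xs"
    and "\<gamma> > norm2 n (\<lambda>i. b i - proj_lin n b i) /
             (2 * sqrt ((1 - cos (pi / real n)) * (1 - cos (pi / real (n - 1)))))"
  shows "trimmed_l1 K (n - 2) (D2 n xs) = 0"
proof (rule ccontr)
  assume "trimmed_l1 K (n - 2) (D2 n xs) \<noteq> 0"
  define x where "x = xs"
  define z where "z = D2 n x"
  define T where "T = trimmed_l1 K (n - 2) z"
  define f where "f = objective n K \<gamma> b"
  have Tpos: "T > 0" using \<open>trimmed_l1 K (n - 2) (D2 n xs) \<noteq> 0\<close> T_nonneg[of K "n-2" z]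
    unfolding T_def z_def x_def by linarith
  have n2: "n \<ge> 2" using assms(1) by simp
  have stat: "\<And>d. \<exists>D. has_dir_deriv f x d D \<and> D \<ge> 0"
    using assms(4) unfolding d_stationary_def f_def x_def by blast
  define c where "c = (\<lambda>j. b j - proj_lin n b j)"
  define v where "v = (\<lambda>j. x j - proj_lin n x j)"
  define w where "w = (\<lambda>j. c j - v j)"
  have w_eq: "\<And>j. w j = (b j - x j) - proj_lin n (\<lambda>j. b j - x j) j"
    unfolding w_def c_def v_def proj_diff by simp
  define a where "a = proj_lin n (\<lambda>j. b j - x j)"
  have bx: "\<And>j. b j - x j = w j + a j" unfolding a_def using w_eq by simp
  define d1 where "d1 = (\<lambda>j. - v j)"
  have Dv: "D2 n v = z" unfolding v_def z_def by (rule D2_proj)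
  have D1: "\<And>t. D2 n (\<lambda>j. x j + t * d1 j) = (\<lambda>j. (1 - t) * z j)"
    unfolding D2_lin d1_def D2_neg Dv z_def by (auto simp: algebra_simps)
  obtain Dd1 where Dd1: "has_dir_deriv f x d1 Dd1" "Dd1 \<ge> 0" using stat by blast
  have "0 \<le> (\<Sum>i<n. (b i - x i) * v i) - \<gamma> * T"
  proof (rule dir_le[OF Dd1, of 1 _ "(\<Sum>i<n. (v i)^2) / 2"])
    show "(0::real) < 1" by simp
    show "\<forall>t. 0 < t \<and> t < 1 \<longrightarrow> (f (\<lambda>i. x i + t * d1 i) - f x) / t
            \<le> (\<Sum>i<n. (b i - x i) * v i) - \<gamma> * T + t * ((\<Sum>i<n. (v i)^2) / 2)"
    proof (intro allI impI)
      fix t :: real assume t: "0 < t \<and> t < 1"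
      have TT: "trimmed_l1 K (n - 2) (D2 n (\<lambda>i. x i + t * d1 i)) = (1 - t) * T"
        unfolding D1 T_def using t by (intro T_scale) simp
      have s1: "(\<Sum>i<n. (x i - b i) * d1 i) = (\<Sum>i<n. (b i - x i) * v i)"
        unfolding d1_def by (rule sum.cong) (auto simp: algebra_simps)
      have s2: "(\<Sum>i<n. (d1 i)^2) = (\<Sum>i<n. (v i)^2)" unfolding d1_def by simp
      have "f (\<lambda>i. x i + t * d1 i) - f x = t * ((\<Sum>i<n. (b i - x i) * v i) - \<gamma> * T + t * ((\<Sum>i<n. (v i)^2) / 2))"
        unfolding f_def obj_diff TT s1 s2 z_def[symmetric] T_def[symmetric]
        by (rule alg1)
      then show "(f (\<lambda>i. x i + t * d1 i) - f x) / t
            \<le> (\<Sum>i<n. (b i - x i) * v i) - \<gamma> * T + t * ((\<Sum>i<n. (v i)^2) / 2)"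
        using t by simp
    qed
  qed
  moreover have "(\<Sum>i<n. (b i - x i) * v i) = (\<Sum>i<n. w i * v i)"
  proof -
    have "(\<Sum>i<n. (b i - x i) * v i) = (\<Sum>i<n. w i * v i) + (\<Sum>i<n. (x i - proj_lin n x i) * a i)"
      unfolding bx v_def by (simp add: sum.distrib[symmetric] algebra_simps)
    also have "(\<Sum>i<n. (x i - proj_lin n x i) * a i) = 0" unfolding a_def by (rule orth_proj[OF n2])
    finally show ?thesis by simp
  qed
  moreover have "\<gamma> * T > 0" using Tpos assms(3) by simp
  ultimately have wv: "(\<Sum>i<n. w i * v i) \<ge> 0" by linarith
  have wc: "norm2 n w \<le> norm2 n c"
  proof -
    have pt: "\<And>i. (w i)^2 = w i * c i - w i * v i"
      unfolding w_def power2_eq_square by (simp only: right_diff_distrib)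
    have "(\<Sum>i<n. (w i)^2) = (\<Sum>i<n. w i * c i) - (\<Sum>i<n. w i * v i)"
      unfolding pt by (rule sum_subtractf)
    hence le: "(\<Sum>i<n. (w i)^2) \<le> \<bar>\<Sum>i<n. w i * c i\<bar>" using wv by linarith
    also have "\<dots> \<le> norm2 n w * norm2 n c" unfolding norm2_def by (rule cs_abs)
    finally have A: "(\<Sum>i<n. (w i)^2) \<le> norm2 n w * norm2 n c" .
    have S0: "0 \<le> (\<Sum>i<n. (w i)^2)" by (rule sum_nonneg) simp
    have "norm2 n w ^ 2 = (\<Sum>i<n. (w i)^2)" unfolding norm2_def using S0 by (rule real_sqrt_pow2)
    with A have B: "norm2 n w * norm2 n w \<le> norm2 n w * norm2 n c" by (simp add: power2_eq_square)
    have "norm2 n w \<ge> 0" "norm2 n c \<ge> 0" unfolding norm2_def by (auto intro!: sum_nonneg)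
    then show ?thesis using B
      by (metis less_eq_real_def mult_le_cancel_left_pos)
  qed
  have Km: "K < n - 2" using assms(1,2) by linarith
  obtain i where i: "i < n - 2" "z i \<noteq> 0"
    and dec: "\<forall>t. 0 < t \<and> t < \<bar>z i\<bar> \<longrightarrow> trimmed_l1 K (n - 2) (z(i := z i - t * sgn (z i))) \<le> T - t"
    using T_decrease[OF Km, of z] Tpos unfolding T_def by blast
  define s where "s = sgn (z i)"
  define g where "g = hfun n (i+1)"
  define d2 where "d2 = (\<lambda>j. - s * (g j - proj_lin n g j))"
  have Dg: "D2 n (\<lambda>j. g j - proj_lin n g j) = (\<lambda>j. if j = i then 1 else 0)"
    unfolding D2_proj g_def by (rule D2_h[OF assms(1) i(1)])
  have D2d: "D2 n d2 = (\<lambda>j. - s * (if j = i then 1 else 0))"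
    unfolding d2_def D2_scale Dg by simp
  have D2x: "\<And>t. D2 n (\<lambda>j. x j + t * d2 j) = z(i := z i - t * s)"
    unfolding D2_lin D2d z_def by (auto simp: fun_eq_iff)
  obtain Dd2 where Dd2: "has_dir_deriv f x d2 Dd2" "Dd2 \<ge> 0" using stat by blast
  have "0 \<le> (\<Sum>i<n. (x i - b i) * d2 i) - \<gamma>"
  proof (rule dir_le[OF Dd2, of "\<bar>z i\<bar>" _ "(\<Sum>i<n. (d2 i)^2) / 2"])
    show "0 < \<bar>z i\<bar>" using i by simp
    show "\<forall>t. 0 < t \<and> t < \<bar>z i\<bar> \<longrightarrow> (f (\<lambda>i. x i + t * d2 i) - f x) / t
            \<le> (\<Sum>i<n. (x i - b i) * d2 i) - \<gamma> + t * ((\<Sum>i<n. (d2 i)^2) / 2)"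
    proof (intro allI impI)
      fix t :: real assume t: "0 < t \<and> t < \<bar>z i\<bar>"
      have TT: "trimmed_l1 K (n - 2) (D2 n (\<lambda>i. x i + t * d2 i)) \<le> T - t"
        unfolding D2x s_def using dec t by blast
      have "f (\<lambda>i. x i + t * d2 i) - f x \<le> t * ((\<Sum>i<n. (x i - b i) * d2 i) - \<gamma> + t * ((\<Sum>i<n. (d2 i)^2) / 2))"
      proof -
        have "\<gamma> * (trimmed_l1 K (n - 2) (D2 n (\<lambda>i. x i + t * d2 i)) - T) \<le> \<gamma> * (- t)"
          using TT assms(3) by (intro mult_left_mono) auto
        then show ?thesis
          unfolding f_def obj_diff z_def[symmetric] T_def[symmetric]
          by (rule alg2)
      qed
      then show "(f (\<lambda>i. x i + t * d2 i) - f x) / t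
            \<le> (\<Sum>i<n. (x i - b i) * d2 i) - \<gamma> + t * ((\<Sum>i<n. (d2 i)^2) / 2)"
        using t by (simp add: divide_le_eq mult.commute)
    qed
  qed
  moreover have "(\<Sum>i<n. (x i - b i) * d2 i) = s * (\<Sum>j<n. w j * g j)"
  proof -
    have "(\<Sum>j<n. (x j - b j) * d2 j) = s * (\<Sum>j<n. (b j - x j) * (g j - proj_lin n g j))"
      unfolding d2_def sum_distrib_left by (rule sum.cong) (auto simp: algebra_simps)
    also have "(\<Sum>j<n. (b j - x j) * (g j - proj_lin n g j))
        = (\<Sum>j<n. w j * g j) - (\<Sum>j<n. w j * proj_lin n g j) + (\<Sum>j<n. (g j - proj_lin n g j) * a j)"
      unfolding bx sum_subtractf[symmetric] sum.distrib[symmetric]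
      by (rule sum.cong) (auto simp: algebra_simps)
    also have "(\<Sum>j<n. w j * proj_lin n g j) = 0"
      unfolding w_eq by (rule orth_proj[OF n2])
    also have "(\<Sum>j<n. (g j - proj_lin n g j) * a j) = 0"
      unfolding a_def by (rule orth_proj[OF n2])
    finally show ?thesis by simp
  qed
  ultimately have "\<gamma> \<le> s * (\<Sum>j<n. w j * g j)" by simp
  also have "\<dots> \<le> \<bar>\<Sum>j<n. w j * g j\<bar>"
    unfolding s_def using i(2) by (cases "z i > 0") (auto simp: sgn_if)
  also have "\<dots> \<le> norm2 n w * norm2 n g" unfolding norm2_def by (rule cs_abs)
  finally have gam: "\<gamma> \<le> norm2 n w * norm2 n g" .
  define \<sigma> where "\<sigma> = 2 * sqrt ((1 - cos (pi / real n)) * (1 - cos (pi / real (n - 1))))"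
  have rn: "real n \<ge> 3" "real (n - 1) \<ge> 2" using assms(1) by (auto simp: of_nat_diff)
  have pa: "0 < 1 - cos (pi / real n)"
    using rn by (intro one_minus_cos_pos) (auto simp: field_simps)
  have pb: "0 < 1 - cos (pi / real (n - 1))"
    using rn by (intro one_minus_cos_pos) (auto simp: field_simps)
  have sig: "\<sigma> > 0" unfolding \<sigma>_def using pa pb by simp
  have "(\<Sum>j<n. (g j)^2) * \<sigma>^2 \<le> (real n - 2) * ((real n - 1) / 4)^2 * (4 * ((1 - cos (pi / real n)) * (1 - cos (pi / real (n - 1)))))"
  proof -
    have "\<sigma>^2 = 4 * ((1 - cos (pi / real n)) * (1 - cos (pi / real (n - 1))))"
      unfolding \<sigma>_def using pa pb by (simp add: power_mult_distrib)
    moreover have "(\<Sum>j<n. (g j)^2) \<le> (real n - 2) * ((real n - 1) / 4)^2"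
      unfolding g_def using assms(1) i(1) by (intro h_sum_bound) auto
    ultimately show ?thesis using pa pb by (simp add: mult_right_mono)
  qed
  also have "\<dots> \<le> 1" by (rule sigma_bound[OF assms(1)])
  finally have G1: "(\<Sum>j<n. (g j)^2) * \<sigma>^2 \<le> 1" .
  have G0: "0 \<le> (\<Sum>j<n. (g j)^2)" by (rule sum_nonneg) simp
  have N: "norm2 n g ^ 2 = (\<Sum>j<n. (g j)^2)" unfolding norm2_def using G0 by (rule real_sqrt_pow2)
  have "(norm2 n g * \<sigma>)^2 = norm2 n g ^ 2 * \<sigma>^2" by (rule power_mult_distrib)
  with N G1 have sq: "(norm2 n g * \<sigma>)^2 \<le> 1^2" by simp
  have gs: "norm2 n g * \<sigma> \<le> 1"
    by (rule power2_le_imp_le[OF sq zero_le_one])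
  have nw: "0 \<le> norm2 n w" unfolding norm2_def by (intro real_sqrt_ge_zero sum_nonneg) simp
  have "\<gamma> * \<sigma> \<le> (norm2 n w * norm2 n g) * \<sigma>"
    by (rule mult_right_mono[OF gam less_imp_le[OF sig]])
  also have "\<dots> = norm2 n w * (norm2 n g * \<sigma>)" by (rule mult.assoc)
  also have "\<dots> \<le> norm2 n w * 1"
    by (rule mult_left_mono[OF gs nw])
  also have "\<dots> \<le> norm2 n c" using wc by simp
  finally have "\<gamma> * \<sigma> \<le> norm2 n c" .
  moreover have "norm2 n c / \<sigma> < \<gamma>"
    using assms(5) unfolding \<sigma>_def[symmetric] c_def[symmetric] .
  hence "norm2 n c < \<gamma> * \<sigma>"
    using sig by (simp add: divide_less_eq)
  ultimately show False by simp
qed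


end
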